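(* Let $X$ be a Banach space and let $q\geq2$. The following are equivalent: (i) $\mathcal F(X)$ has Rademacher cotype (resp. cotype $q$); (ii) $\mathcal F(K)$ has Rademacher cotype (resp. cotype $q$) for every compact set $K\subset X$; (ii') $\mathcal F(K)$ has Rademacher cotype (resp. cotype $q$) for every countable compact set $K\subset X$; (iii) $\mathcal F(\{x_n\}_n)$ has Rademacher cotype (resp. cotype $q$) for every null sequence $(x_n)_n\subset X$.
   Context: For a pointed metric space $M$ (the choice of base point does not affect the isomorphism class), $\mathrm{Lip}_0(M)$ is the Banach space of real Lipschitz functions vanishing at the base point normed by the Lipschitz constant, and $\mathcal F(M)=\overline{\mathrm{span}}\{\delta(x):x\in M\}\subset\mathrm{Lip}_0(M)^*$, $\delta(x)$ being evaluation at $x$. A Banach space has Rademacher cotype if it has cotype $q$ for some $q<\infty$. A null sequence is a sequence converging to $0$ in norm; $\{x_n\}_n$ denotes its set of terms with the metric from $X$. *)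

theory Defs
  imports "HOL-Analysis.Analysis"
begin

text \<open>Lipschitz-free space over a subset M of a metric space, realised inside
the dual of Lip_0(M).  A functional is any map from real functions to reals;
Lip_0(M) is represented by functions vanishing off M (values off M are irrelevant),
vanishing at a base point of M, and its closed unit ball is the set of such
functions which are 1-Lipschitz on M.\<close>

definition base_point :: "'a set \<Rightarrow> 'a" where
  "base_point M = (SOME p. p \<in> M)"

definition lip0_ball :: "'a::metric_space set \<Rightarrow> ('a \<Rightarrow> real) set" where
  "lip0_ball M = {f. 1-lipschitz_on M f \<and> (\<forall>x. x \<notin> M \<longrightarrow> f x = 0)
                      \<and> (M \<noteq> {} \<longrightarrow> f (base_point M) = 0)}"

text \<open>Dual norm on Lip_0(M)^*.\<close>
definition free_norm :: "'a::metric_space set \<Rightarrow> (('a \<Rightarrow> real) \<Rightarrow> real) \<Rightarrow> real" where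
  "free_norm M \<phi> = Sup {\<bar>\<phi> f\<bar> | f. f \<in> lip0_ball M}"

text \<open>F(M): the norm closure in Lip_0(M)^* of the span of the evaluations delta(x), x in M.\<close>
definition free_space :: "'a::metric_space set \<Rightarrow> (('a \<Rightarrow> real) \<Rightarrow> real) set" where
  "free_space M = {\<phi>. \<forall>e>0. \<exists>S a. finite S \<and> S \<subseteq> M \<and>
       (\<forall>f \<in> lip0_ball M. \<bar>\<phi> f - (\<Sum>x\<in>S. a x * f x)\<bar> \<le> e)}"

text \<open>Sign vectors of length n.\<close>
definition signs :: "nat \<Rightarrow> (nat \<Rightarrow> real) set" where
  "signs n = {\<epsilon>. (\<forall>i<n. \<epsilon> i \<in> {-1, 1}) \<and> (\<forall>i\<ge>n. \<epsilon> i = 0)}"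

text \<open>Rademacher cotype q of F(M): there is C such that for all finitely many
x_1..x_n in F(M), (sum ||x_i||^q)^(1/q) <= C (Average_eps ||sum eps_i x_i||^2)^(1/2).\<close>
definition free_has_cotype :: "'a::metric_space set \<Rightarrow> real \<Rightarrow> bool" where
  "free_has_cotype M q \<longleftrightarrow> (\<exists>C>0. \<forall>n v. (\<forall>i<n. v i \<in> free_space M) \<longrightarrow>
      (\<Sum>i<n. free_norm M (v i) powr q) powr (1/q)
        \<le> C * sqrt ((\<Sum>\<epsilon>\<in>signs n. (free_norm M (\<lambda>f. \<Sum>i<n. \<epsilon> i * v i f))\<^sup>2) / 2 ^ n))"

definition free_has_rademacher_cotype :: "'a::metric_space set \<Rightarrow> bool" where
  "free_has_rademacher_cotype M \<longleftrightarrow> (\<exists>q. 2 \<le> q \<and> free_has_cotype M q)"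

end

theory Submission
  imports Defs
begin

definition mol :: "'a set \<Rightarrow> ('a \<Rightarrow> real) \<Rightarrow> ('a \<Rightarrow> real) \<Rightarrow> real" where
  "mol S a = (\<lambda>f. \<Sum>x\<in>S. a x * f x)"

definition znorm :: "'a::metric_space set \<Rightarrow> ('a \<Rightarrow> real) \<Rightarrow> real" where
  "znorm S a = Sup {\<bar>\<Sum>x\<in>S. a x * g x\<bar> | g. 1-lipschitz_on S g}"

lemma zero_in_lip0: "(\<lambda>_. 0) \<in> lip0_ball M"
  by (simp add: lip0_ball_def lipschitz_on_def)

lemma base_in: "M \<noteq> {} \<Longrightarrow> base_point M \<in> M"
  unfolding base_point_def by (simp add: some_in_eq)

lemma lip0_bound:
  assumes "f \<in> lip0_ball M" "x \<in> M"
  shows "\<bar>f x\<bar> \<le> dist x (base_point M)"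
proof -
  have p: "base_point M \<in> M" using assms(2) base_in by blast
  have "dist (f x) (f (base_point M)) \<le> 1 * dist x (base_point M)"
    using assms p unfolding lip0_ball_def lipschitz_on_def by blast
  moreover have "f (base_point M) = 0" using assms unfolding lip0_ball_def by blast
  ultimately show ?thesis by (simp add: dist_real_def)
qed

lemma mcshane:
  fixes g :: "'a::metric_space \<Rightarrow> real"
  assumes "finite S" "S \<noteq> {}" "1-lipschitz_on S g"
  shows "\<exists>h. 1-lipschitz_on UNIV h \<and> (\<forall>x\<in>S. h x = g x)"
proof -
  define h where "h y = Min ((\<lambda>s. g s + dist y s) ` S)" for y
  have fin: "finite ((\<lambda>s. g s + dist y s) ` S)" for y using assms by simp
  have ne: "(\<lambda>s. g s + dist y s) ` S \<noteq> {}" for y using assms by simp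
  have le: "h y \<le> g s + dist y s" if "s \<in> S" for y s
    unfolding h_def using fin ne that by (simp add: Min_le_iff)
  have ex: "\<exists>s\<in>S. h y = g s + dist y s" for y
  proof -
    have "h y \<in> (\<lambda>s. g s + dist y s) ` S" unfolding h_def using Min_in[OF fin ne] .
    then show ?thesis by auto
  qed
  have hl: "h y \<le> h z + dist y z" for y z
  proof -
    obtain s where s: "s \<in> S" "h z = g s + dist z s" using ex by blast
    have "h y \<le> g s + dist y s" using le s by blast
    also have "\<dots> \<le> g s + dist z s + dist y z" using dist_triangle[of y s z] by (simp add: dist_commute)
    finally show ?thesis using s by simp
  qed
  have "1-lipschitz_on UNIV h"
    unfolding lipschitz_on_def dist_real_def
    using hl by (smt (verit, best) dist_commute mult_1)
  moreover have "h x = g x" if "x \<in> S" for x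
  proof -
    have "h x \<le> g x" using le[OF that, of x] by simp
    moreover obtain s where s: "s \<in> S" "h x = g s + dist x s" using ex by blast
    have "dist (g x) (g s) \<le> 1 * dist x s" using assms(3) that s(1) unfolding lipschitz_on_def by blast
    then have "g x \<le> g s + dist x s" by (simp add: dist_real_def)
    ultimately show ?thesis using s by simp
  qed
  ultimately show ?thesis by blast
qed

lemma key:
  fixes M :: "'a::metric_space set"
  assumes "finite S" "S \<subseteq> M" "(\<Sum>x\<in>S. a x) = 0"
  shows "free_norm M (mol S a) = znorm S a"
proof -
  have "{\<bar>mol S a f\<bar> | f. f \<in> lip0_ball M} = {\<bar>\<Sum>x\<in>S. a x * g x\<bar> | g. 1-lipschitz_on S g}"
  proof (intro equalityI subsetI)
    fix t assume "t \<in> {\<bar>mol S a f\<bar> | f. f \<in> lip0_ball M}"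
    then obtain f where f: "f \<in> lip0_ball M" "t = \<bar>mol S a f\<bar>" by blast
    have "1-lipschitz_on S f" using f(1) assms(2) unfolding lip0_ball_def
      using lipschitz_on_subset by blast
    then show "t \<in> {\<bar>\<Sum>x\<in>S. a x * g x\<bar> | g. 1-lipschitz_on S g}" using f(2) unfolding mol_def by blast
  next
    fix t assume "t \<in> {\<bar>\<Sum>x\<in>S. a x * g x\<bar> | g. 1-lipschitz_on S g}"
    then obtain g where g: "1-lipschitz_on S g" "t = \<bar>\<Sum>x\<in>S. a x * g x\<bar>" by blast
    show "t \<in> {\<bar>mol S a f\<bar> | f. f \<in> lip0_ball M}"
    proof (cases "S = {}")
      case True
      then show ?thesis using g zero_in_lip0[of M] unfolding mol_def by force
    next
      case False
      then have Mne: "M \<noteq> {}" using assms by blast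
      obtain h where h: "1-lipschitz_on UNIV h" "\<forall>x\<in>S. h x = g x"
        using mcshane[OF assms(1) False g(1)] by blast
      define p where "p = base_point M"
      have p: "p \<in> M" using base_in[OF Mne] p_def by simp
      define f where "f y = (if y \<in> M then h y - h p else 0)" for y
      have "1-lipschitz_on M f"
        using h(1) unfolding lipschitz_on_def f_def by (simp add: dist_real_def)
      then have fl: "f \<in> lip0_ball M" unfolding lip0_ball_def f_def p_def using p p_def by simp
      have "mol S a f = (\<Sum>x\<in>S. a x * g x - a x * h p)"
        unfolding mol_def f_def using assms(2) h(2)
        by (intro sum.cong) (auto simp: algebra_simps)
      also have "\<dots> = (\<Sum>x\<in>S. a x * g x)"
        using assms(3) by (simp add: sum_subtractf sum_distrib_right[symmetric])
      finally have "t = \<bar>mol S a f\<bar>" using g(2) by simp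
      then show ?thesis using fl by blast
    qed
  qed
  then show ?thesis unfolding free_norm_def znorm_def by simp
qed

definition bnd :: "'a::metric_space set \<Rightarrow> (('a \<Rightarrow> real) \<Rightarrow> real) \<Rightarrow> bool" where
  "bnd M \<phi> \<longleftrightarrow> (\<exists>B. \<forall>f\<in>lip0_ball M. \<bar>\<phi> f\<bar> \<le> B)"

lemma bnd_bdd: "bnd M \<phi> \<Longrightarrow> bdd_above {\<bar>\<phi> f\<bar> | f. f \<in> lip0_ball M}"
  unfolding bnd_def bdd_above_def by blast

lemma free_norm_upper: "bnd M \<phi> \<Longrightarrow> f \<in> lip0_ball M \<Longrightarrow> \<bar>\<phi> f\<bar> \<le> free_norm M \<phi>"
proof -
  assume b: "bnd M \<phi>" and f: "f \<in> lip0_ball M"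
  have "\<bar>\<phi> f\<bar> \<in> {\<bar>\<phi> f\<bar> | f. f \<in> lip0_ball M}" using f by blast
  then show ?thesis unfolding free_norm_def using bnd_bdd[OF b] by (rule cSup_upper)
qed

lemma free_norm_nonneg: "bnd M \<phi> \<Longrightarrow> 0 \<le> free_norm M \<phi>"
proof -
  assume b: "bnd M \<phi>"
  have "\<bar>\<phi> (\<lambda>_. 0)\<bar> \<le> free_norm M \<phi>" using free_norm_upper[OF b zero_in_lip0] .
  then show ?thesis by linarith
qed

lemma free_norm_le:
  assumes "bnd M \<psi>" "\<forall>f\<in>lip0_ball M. \<bar>\<phi> f - \<psi> f\<bar> \<le> e"
  shows "free_norm M \<phi> \<le> free_norm M \<psi> + e"
  unfolding free_norm_def[of M \<phi>]
proof (rule cSup_least)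
  show "{\<bar>\<phi> f\<bar> |f. f \<in> lip0_ball M} \<noteq> {}" using zero_in_lip0 by blast
  fix t assume "t \<in> {\<bar>\<phi> f\<bar> |f. f \<in> lip0_ball M}"
  then obtain f where f: "f \<in> lip0_ball M" "t = \<bar>\<phi> f\<bar>" by blast
  have "\<bar>\<psi> f\<bar> \<le> free_norm M \<psi>" using free_norm_upper[OF assms(1) f(1)] .
  moreover have "\<bar>\<phi> f - \<psi> f\<bar> \<le> e" using assms(2) f(1) by blast
  ultimately show "t \<le> free_norm M \<psi> + e" using f(2) by linarith
qed

lemma free_norm_close:
  assumes "bnd M \<phi>" "bnd M \<psi>" "\<forall>f\<in>lip0_ball M. \<bar>\<phi> f - \<psi> f\<bar> \<le> e"
  shows "\<bar>free_norm M \<phi> - free_norm M \<psi>\<bar> \<le> e"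
proof -
  have "free_norm M \<phi> \<le> free_norm M \<psi> + e" using free_norm_le assms by blast
  moreover have "free_norm M \<psi> \<le> free_norm M \<phi> + e"
    using free_norm_le[OF assms(1)] assms(3) by (simp add: abs_minus_commute)
  ultimately show ?thesis by linarith
qed

lemma bnd_sum:
  fixes n :: nat
  assumes "\<forall>i<n. bnd M (\<phi> i)"
  shows "bnd M (\<lambda>f. \<Sum>i<n. c i * \<phi> i f)"
proof -
  obtain B where B: "\<forall>i<n. \<forall>f\<in>lip0_ball M. \<bar>\<phi> i f\<bar> \<le> B i"
  proof -
    have "\<forall>i. \<exists>B. i < n \<longrightarrow> (\<forall>f\<in>lip0_ball M. \<bar>\<phi> i f\<bar> \<le> B)"
      using assms unfolding bnd_def by blast
    then have "\<exists>B. \<forall>i. i < n \<longrightarrow> (\<forall>f\<in>lip0_ball M. \<bar>\<phi> i f\<bar> \<le> B i)" by (rule choice)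
    then show ?thesis using that by blast
  qed
  have "\<bar>\<Sum>i<n. c i * \<phi> i f\<bar> \<le> (\<Sum>i<n. \<bar>c i\<bar> * B i)" if "f \<in> lip0_ball M" for f
  proof -
    have "\<bar>\<Sum>i<n. c i * \<phi> i f\<bar> \<le> (\<Sum>i<n. \<bar>c i * \<phi> i f\<bar>)" by (rule sum_abs)
    also have "\<dots> \<le> (\<Sum>i<n. \<bar>c i\<bar> * B i)"
      using B that by (intro sum_mono) (auto simp: abs_mult intro: mult_left_mono)
    finally show ?thesis .
  qed
  then show ?thesis unfolding bnd_def by blast
qed

lemma mol_in_free: "finite S \<Longrightarrow> S \<subseteq> M \<Longrightarrow> mol S a \<in> free_space M"
proof -
  assume "finite S" "S \<subseteq> M"
  then have "\<forall>f \<in> lip0_ball M. \<bar>(\<Sum>x\<in>S. a x * f x) - (\<Sum>x\<in>S. a x * f x)\<bar> \<le> e" if "e > 0" for e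
    using that by simp
  then show ?thesis unfolding free_space_def mol_def using \<open>finite S\<close> \<open>S \<subseteq> M\<close> by blast
qed

lemma mol_combo: fixes n :: nat shows "(\<lambda>f. \<Sum>i<n. c i * mol S (a i) f) = mol S (\<lambda>x. \<Sum>i<n. c i * a i x)"
proof (rule ext)
  fix f
  have "(\<Sum>i<n. c i * mol S (a i) f) = (\<Sum>i<n. \<Sum>x\<in>S. c i * a i x * f x)"
    unfolding mol_def by (simp add: sum_distrib_left mult.assoc)
  also have "\<dots> = (\<Sum>x\<in>S. \<Sum>i<n. c i * a i x * f x)" by (rule sum.swap)
  also have "\<dots> = mol S (\<lambda>x. \<Sum>i<n. c i * a i x) f"
    unfolding mol_def by (simp add: sum_distrib_right)
  finally show "(\<Sum>i<n. c i * mol S (a i) f) = mol S (\<lambda>x. \<Sum>i<n. c i * a i x) f" .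
qed

lemma combo_zero: fixes n :: nat shows "\<forall>i<n. (\<Sum>x\<in>S. a i x) = 0 \<Longrightarrow> (\<Sum>x\<in>S. \<Sum>i<n. c i * a i x) = (0::real)"
proof -
  assume h: "\<forall>i<n. (\<Sum>x\<in>S. a i x) = 0"
  have "(\<Sum>x\<in>S. \<Sum>i<n. c i * a i x) = (\<Sum>i<n. \<Sum>x\<in>S. c i * a i x)" by (rule sum.swap)
  also have "\<dots> = (\<Sum>i<n. c i * (\<Sum>x\<in>S. a i x))"
    by (rule sum.cong[OF refl], rule sum_distrib_left[symmetric])
  also have "\<dots> = 0" using h by simp
  finally show ?thesis .
qed

lemma free_space_bnd:
  assumes "M \<noteq> {}" "\<phi> \<in> free_space M"
  shows "bnd M \<phi>"
proof -
  have "\<exists>S a. finite S \<and> S \<subseteq> M \<and> (\<forall>f \<in> lip0_ball M. \<bar>\<phi> f - (\<Sum>x\<in>S. a x * f x)\<bar> \<le> 1)"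
    using assms(2) unfolding free_space_def by simp
  then obtain S a where Sa: "finite S" "S \<subseteq> M" "\<forall>f \<in> lip0_ball M. \<bar>\<phi> f - (\<Sum>x\<in>S. a x * f x)\<bar> \<le> 1"
    by blast
  have "\<bar>\<phi> f\<bar> \<le> 1 + (\<Sum>x\<in>S. \<bar>a x\<bar> * dist x (base_point M))" if f: "f \<in> lip0_ball M" for f
  proof -
    have "\<bar>\<Sum>x\<in>S. a x * f x\<bar> \<le> (\<Sum>x\<in>S. \<bar>a x * f x\<bar>)" by (rule sum_abs)
    also have "\<dots> \<le> (\<Sum>x\<in>S. \<bar>a x\<bar> * dist x (base_point M))"
    proof (rule sum_mono)
      fix x assume "x \<in> S"
      then have "\<bar>f x\<bar> \<le> dist x (base_point M)" using lip0_bound[OF f] Sa(2) by blast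
      then show "\<bar>a x * f x\<bar> \<le> \<bar>a x\<bar> * dist x (base_point M)"
        unfolding abs_mult by (rule mult_left_mono) simp
    qed
    finally have "\<bar>\<Sum>x\<in>S. a x * f x\<bar> \<le> (\<Sum>x\<in>S. \<bar>a x\<bar> * dist x (base_point M))" .
    moreover have "\<bar>\<phi> f - (\<Sum>x\<in>S. a x * f x)\<bar> \<le> 1" using Sa(3) f by blast
    ultimately show ?thesis by linarith
  qed
  then show ?thesis unfolding bnd_def by blast
qed

lemma approx:
  fixes n :: nat
  assumes "M \<noteq> {}" "\<forall>i<n. v i \<in> free_space M" "e > 0"
  shows "\<exists>S a. finite S \<and> S \<subseteq> M \<and> (\<forall>i<n. (\<Sum>x\<in>S. a i x) = 0) \<and>
           (\<forall>i<n. \<forall>f\<in>lip0_ball M. \<bar>v i f - mol S (a i) f\<bar> \<le> e)"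
proof -
  define P where "P i Sb \<longleftrightarrow> (i < n \<longrightarrow> finite (fst Sb) \<and> fst Sb \<subseteq> M \<and>
     (\<forall>f \<in> lip0_ball M. \<bar>v i f - (\<Sum>x\<in>fst Sb. snd Sb x * f x)\<bar> \<le> e))" for i Sb
  have "\<forall>i. \<exists>Sb. P i Sb"
  proof
    fix i show "\<exists>Sb. P i Sb"
    proof (cases "i < n")
      case True
      then have "v i \<in> free_space M" using assms(2) by blast
      then obtain S b where "finite S" "S \<subseteq> M" "\<forall>f \<in> lip0_ball M. \<bar>v i f - (\<Sum>x\<in>S. b x * f x)\<bar> \<le> e"
        unfolding free_space_def using assms(3) by blast
      then have "P i (S, b)" unfolding P_def by simp
      then show ?thesis by blast
    qed (simp add: P_def)
  qed
  then have "\<exists>Sb. \<forall>i. P i (Sb i)" by (rule choice)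
  then obtain Sb where SbP: "\<forall>i. P i (Sb i)" by blast
  have Sb: "finite (fst (Sb i))" "fst (Sb i) \<subseteq> M"
     "\<forall>f \<in> lip0_ball M. \<bar>v i f - (\<Sum>x\<in>fst (Sb i). snd (Sb i) x * f x)\<bar> \<le> e" if "i < n" for i
    using SbP that unfolding P_def by blast+
  define p where "p = base_point M"
  have p: "p \<in> M" using base_in[OF assms(1)] p_def by simp
  define S where "S = insert p (\<Union>i<n. fst (Sb i))"
  define a where "a i x = (if x \<in> fst (Sb i) then snd (Sb i) x else 0)
       - (if x = p then (\<Sum>y\<in>fst (Sb i). snd (Sb i) y) else 0)" for i x
  have "finite (\<Union>i<n. fst (Sb i))" by (rule finite_UN_I) (simp_all add: Sb(1))
  then have finS: "finite S" unfolding S_def by simp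
  have SM: "S \<subseteq> M" using Sb(2) p unfolding S_def by auto
  have sub: "fst (Sb i) \<subseteq> S" if "i < n" for i using that unfolding S_def by auto
  have pS: "p \<in> S" unfolding S_def by simp
  have "(\<Sum>x\<in>S. a i x) = 0" if "i < n" for i
  proof -
    have e1: "(\<Sum>x\<in>S. (if x \<in> fst (Sb i) then snd (Sb i) x else 0)) = (\<Sum>y\<in>fst (Sb i). snd (Sb i) y)"
      using finS sub[OF that] by (simp add: sum.inter_restrict[symmetric] Int_absorb1)
    have e2: "(\<Sum>x\<in>S. (if x = p then (\<Sum>y\<in>fst (Sb i). snd (Sb i) y) else 0)) = (\<Sum>y\<in>fst (Sb i). snd (Sb i) y)"
      using finS pS by (simp add: sum.delta)
    show ?thesis unfolding a_def sum_subtractf e1 e2 by simp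
  qed
  moreover have "\<bar>v i f - mol S (a i) f\<bar> \<le> e" if "i < n" "f \<in> lip0_ball M" for i f
  proof -
    have fp: "f p = 0" using that(2) assms(1) unfolding lip0_ball_def p_def by blast
    have e1: "(\<Sum>x\<in>S. (if x \<in> fst (Sb i) then snd (Sb i) x else 0) * f x) = (\<Sum>y\<in>fst (Sb i). snd (Sb i) y * f y)"
    proof -
      have "(\<Sum>x\<in>S. (if x \<in> fst (Sb i) then snd (Sb i) x else 0) * f x)
          = (\<Sum>x\<in>S. (if x \<in> fst (Sb i) then snd (Sb i) x * f x else 0))"
        by (rule sum.cong) auto
      also have "\<dots> = (\<Sum>y\<in>fst (Sb i). snd (Sb i) y * f y)"
        using finS sub[OF that(1)] by (simp add: sum.inter_restrict[symmetric] Int_absorb1)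
      finally show ?thesis .
    qed
    have e2: "(\<Sum>x\<in>S. (if x = p then (\<Sum>y\<in>fst (Sb i). snd (Sb i) y) else 0) * f x) = 0"
    proof -
      have "(\<Sum>x\<in>S. (if x = p then (\<Sum>y\<in>fst (Sb i). snd (Sb i) y) else 0) * f x)
          = (\<Sum>x\<in>S. (if x = p then (\<Sum>y\<in>fst (Sb i). snd (Sb i) y) * f x else 0))"
        by (rule sum.cong) auto
      also have "\<dots> = 0" using finS pS fp by (simp add: sum.delta)
      finally show ?thesis .
    qed
    have "mol S (a i) f = (\<Sum>y\<in>fst (Sb i). snd (Sb i) y * f y)"
      unfolding mol_def a_def left_diff_distrib sum_subtractf e1 e2 by simp
    then show ?thesis using Sb(3)[OF that(1)] that(2) by simp
  qed
  ultimately show ?thesis using finS SM by blast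
qed

definition LHSv :: "real \<Rightarrow> 'a::metric_space set \<Rightarrow> (nat \<Rightarrow> 'a \<Rightarrow> real) \<Rightarrow> nat \<Rightarrow> real" where
  "LHSv q S a n = (\<Sum>i<n. znorm S (a i) powr q) powr (1/q)"

definition RHSv :: "'a::metric_space set \<Rightarrow> (nat \<Rightarrow> 'a \<Rightarrow> real) \<Rightarrow> nat \<Rightarrow> real" where
  "RHSv S a n = sqrt ((\<Sum>\<epsilon>\<in>signs n. (znorm S (\<lambda>x. \<Sum>i<n. \<epsilon> i * a i x))\<^sup>2) / 2 ^ n)"

definition QQ :: "'a::metric_space set \<Rightarrow> real \<Rightarrow> real \<Rightarrow> bool" where
  "QQ M q C \<longleftrightarrow> (\<forall>n S a. finite S \<and> S \<subseteq> M \<and> (\<forall>i<n. (\<Sum>x\<in>S. a i x) = 0)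
      \<longrightarrow> LHSv q S a n \<le> C * RHSv S a n)"

definition cotC :: "'a::metric_space set \<Rightarrow> real \<Rightarrow> real \<Rightarrow> bool" where
  "cotC M q C \<longleftrightarrow> (\<forall>n v. (\<forall>i<n. v i \<in> free_space M) \<longrightarrow>
      (\<Sum>i<n. free_norm M (v i) powr q) powr (1/q)
        \<le> C * sqrt ((\<Sum>\<epsilon>\<in>signs n. (free_norm M (\<lambda>f. \<Sum>i<n. \<epsilon> i * v i f))\<^sup>2) / 2 ^ n))"

lemma cot_iff: "free_has_cotype M q \<longleftrightarrow> (\<exists>C>0. cotC M q C)"
  unfolding free_has_cotype_def cotC_def by simp

lemma conv_rate:
  fixes X :: "nat \<Rightarrow> real"
  assumes "\<forall>k. \<bar>X k - x\<bar> \<le> D / real (Suc k)"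
  shows "X \<longlonglongrightarrow> x"
proof -
  have "(\<lambda>k. D / real (Suc k)) \<longlonglongrightarrow> 0" using LIMSEQ_Suc[OF lim_const_over_n[of D]] by simp
  then have "(\<lambda>k. X k - x) \<longlonglongrightarrow> 0"
    by (intro Lim_null_comparison[of "\<lambda>k. X k - x" "\<lambda>k. D / real (Suc k)"]) (use assms in auto)
  then show ?thesis by (rule LIM_zero_cancel)
qed

lemma L1:
  fixes M :: "'a::metric_space set"
  assumes "cotC M q C"
  shows "QQ M q C"
  unfolding QQ_def
proof (intro allI impI)
  fix n :: nat and S :: "'a set" and a :: "nat \<Rightarrow> 'a \<Rightarrow> real"
  assume h: "finite S \<and> S \<subseteq> M \<and> (\<forall>i<n. (\<Sum>x\<in>S. a i x) = 0)"
  have "\<forall>i<n. mol S (a i) \<in> free_space M" using h by (simp add: mol_in_free)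
  then have ineq: "(\<Sum>i<n. free_norm M (mol S (a i)) powr q) powr (1/q)
        \<le> C * sqrt ((\<Sum>\<epsilon>\<in>signs n. (free_norm M (\<lambda>f. \<Sum>i<n. \<epsilon> i * mol S (a i) f))\<^sup>2) / 2 ^ n)"
    using assms[unfolded cotC_def, rule_format, of n "\<lambda>i. mol S (a i)"] by simp
  have e1: "(\<Sum>i<n. free_norm M (mol S (a i)) powr q) = (\<Sum>i<n. znorm S (a i) powr q)"
  proof (rule sum.cong[OF refl])
    fix i assume "i \<in> {..<n}"
    then have "(\<Sum>x\<in>S. a i x) = 0" using h by auto
    then show "free_norm M (mol S (a i)) powr q = znorm S (a i) powr q" using key[of S M "a i"] h by simp
  qed
  have e2: "free_norm M (\<lambda>f. \<Sum>i<n. \<epsilon> i * mol S (a i) f) = znorm S (\<lambda>x. \<Sum>i<n. \<epsilon> i * a i x)" for \<epsilon>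
  proof -
    have "(\<Sum>x\<in>S. \<Sum>i<n. \<epsilon> i * a i x) = 0" using h by (intro combo_zero) blast
    then show ?thesis unfolding mol_combo using h by (intro key) auto
  qed
  show "LHSv q S a n \<le> C * RHSv S a n"
    using ineq unfolding e1 e2 LHSv_def RHSv_def .
qed

lemma L2:
  fixes M :: "'a::metric_space set"
  assumes "M \<noteq> {}" "q > 0" "QQ M q C"
  shows "cotC M q C"
  unfolding cotC_def
proof (intro allI impI)
  fix n :: nat and v
  assume v: "\<forall>i<n. v i \<in> free_space M"
  have vb: "bnd M (v i)" if "i<n" for i using v that by (intro free_space_bnd[OF assms(1)]) simp
  have "\<forall>k. \<exists>Sa. finite (fst Sa) \<and> fst Sa \<subseteq> M \<and> (\<forall>i<n. (\<Sum>x\<in>fst Sa. snd Sa i x) = 0) \<and>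
       (\<forall>i<n. \<forall>f\<in>lip0_ball M. \<bar>v i f - mol (fst Sa) (snd Sa i) f\<bar> \<le> 1 / real (Suc k))"
  proof
    fix k
    have "1 / real (Suc k) > 0" by simp
    from approx[OF assms(1) v this]
    show "\<exists>Sa. finite (fst Sa) \<and> fst Sa \<subseteq> M \<and> (\<forall>i<n. (\<Sum>x\<in>fst Sa. snd Sa i x) = 0) \<and>
       (\<forall>i<n. \<forall>f\<in>lip0_ball M. \<bar>v i f - mol (fst Sa) (snd Sa i) f\<bar> \<le> 1 / real (Suc k))"
    proof (elim exE)
      fix S a
      assume "finite S \<and> S \<subseteq> M \<and> (\<forall>i<n. (\<Sum>x\<in>S. a i x) = 0) \<and>
           (\<forall>i<n. \<forall>f\<in>lip0_ball M. \<bar>v i f - mol S (a i) f\<bar> \<le> 1 / real (Suc k))"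
      then show ?thesis by (intro exI[of _ "(S, a)"]) simp
    qed
  qed
  then have "\<exists>SA. \<forall>k. finite (fst (SA k)) \<and> fst (SA k) \<subseteq> M \<and> (\<forall>i<n. (\<Sum>x\<in>fst (SA k). snd (SA k) i x) = 0) \<and>
       (\<forall>i<n. \<forall>f\<in>lip0_ball M. \<bar>v i f - mol (fst (SA k)) (snd (SA k) i) f\<bar> \<le> 1 / real (Suc k))"
    by (rule choice)
  then obtain SA where SA: "\<forall>k. finite (fst (SA k)) \<and> fst (SA k) \<subseteq> M \<and> (\<forall>i<n. (\<Sum>x\<in>fst (SA k). snd (SA k) i x) = 0) \<and>
       (\<forall>i<n. \<forall>f\<in>lip0_ball M. \<bar>v i f - mol (fst (SA k)) (snd (SA k) i) f\<bar> \<le> 1 / real (Suc k))"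
    by (rule exE)
  define SS where "SS k = fst (SA k)" for k
  define AA where "AA k = snd (SA k)" for k
  have fin: "finite (SS k)" "SS k \<subseteq> M" "\<forall>i<n. (\<Sum>x\<in>SS k. AA k i x) = 0"
    "\<forall>i<n. \<forall>f\<in>lip0_ball M. \<bar>v i f - mol (SS k) (AA k i) f\<bar> \<le> 1 / real (Suc k)" for k
  proof -
    have "finite (SS k) \<and> SS k \<subseteq> M \<and> (\<forall>i<n. (\<Sum>x\<in>SS k. AA k i x) = 0) \<and>
       (\<forall>i<n. \<forall>f\<in>lip0_ball M. \<bar>v i f - mol (SS k) (AA k i) f\<bar> \<le> 1 / real (Suc k))"
      unfolding SS_def AA_def by (rule SA[rule_format])
    then show "finite (SS k)" "SS k \<subseteq> M" "\<forall>i<n. (\<Sum>x\<in>SS k. AA k i x) = 0"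
      "\<forall>i<n. \<forall>f\<in>lip0_ball M. \<bar>v i f - mol (SS k) (AA k i) f\<bar> \<le> 1 / real (Suc k)"
      by blast+
  qed
  have molb: "bnd M (mol (SS k) (AA k i))" for k i
    using free_space_bnd[OF assms(1) mol_in_free[OF fin(1,2)]] .
  define N where "N k i = free_norm M (mol (SS k) (AA k i))" for k i
  define NS where "NS k \<epsilon> = free_norm M (\<lambda>f. \<Sum>i<n. \<epsilon> i * mol (SS k) (AA k i) f)" for k \<epsilon>
  have ineq: "(\<Sum>i<n. N k i powr q) powr (1/q) \<le> C * sqrt ((\<Sum>\<epsilon>\<in>signs n. (NS k \<epsilon>)\<^sup>2) / 2 ^ n)" for k
  proof -
    have a: "LHSv q (SS k) (AA k) n \<le> C * RHSv (SS k) (AA k) n"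
      by (rule assms(3)[unfolded QQ_def, rule_format, of "SS k" n "AA k"]) (simp add: fin(1,2,3))
    have e1: "(\<Sum>i<n. znorm (SS k) (AA k i) powr q) = (\<Sum>i<n. N k i powr q)"
    proof (rule sum.cong[OF refl])
      fix i assume "i \<in> {..<n}"
      then have "(\<Sum>x\<in>SS k. AA k i x) = 0" using fin(3) by auto
      then show "znorm (SS k) (AA k i) powr q = N k i powr q"
        unfolding N_def using key[OF fin(1,2)] by simp
    qed
    have e2: "znorm (SS k) (\<lambda>x. \<Sum>i<n. \<epsilon> i * AA k i x) = NS k \<epsilon>" for \<epsilon>
      unfolding NS_def mol_combo using key[OF fin(1,2) combo_zero[OF fin(3)]] by simp
    show ?thesis using a unfolding LHSv_def RHSv_def e1 e2 .
  qed
  have Nconv: "(\<lambda>k. N k i) \<longlonglongrightarrow> free_norm M (v i)" if "i<n" for i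
  proof (rule conv_rate[where D=1], rule allI)
    fix k
    have "\<forall>f\<in>lip0_ball M. \<bar>v i f - mol (SS k) (AA k i) f\<bar> \<le> 1 / real (Suc k)"
      using fin(4) that by blast
    then have "\<bar>free_norm M (v i) - N k i\<bar> \<le> 1 / real (Suc k)"
      unfolding N_def by (rule free_norm_close[OF vb[OF that] molb])
    then show "\<bar>N k i - free_norm M (v i)\<bar> \<le> 1 / real (Suc k)" by (simp add: abs_minus_commute)
  qed
  have NSconv: "(\<lambda>k. NS k \<epsilon>) \<longlonglongrightarrow> free_norm M (\<lambda>f. \<Sum>i<n. \<epsilon> i * v i f)" for \<epsilon>
  proof (rule conv_rate[where D="\<Sum>i<n. \<bar>\<epsilon> i\<bar>"], rule allI)
    fix k
    have b1: "bnd M (\<lambda>f. \<Sum>i<n. \<epsilon> i * v i f)" by (rule bnd_sum) (simp add: vb)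
    have b2: "bnd M (\<lambda>f. \<Sum>i<n. \<epsilon> i * mol (SS k) (AA k i) f)" by (rule bnd_sum) (simp add: molb)
    have "\<forall>f\<in>lip0_ball M. \<bar>(\<Sum>i<n. \<epsilon> i * v i f) - (\<Sum>i<n. \<epsilon> i * mol (SS k) (AA k i) f)\<bar>
        \<le> (\<Sum>i<n. \<bar>\<epsilon> i\<bar>) / real (Suc k)"
    proof
      fix f assume f: "f \<in> lip0_ball M"
      have "\<bar>(\<Sum>i<n. \<epsilon> i * v i f) - (\<Sum>i<n. \<epsilon> i * mol (SS k) (AA k i) f)\<bar>
          = \<bar>\<Sum>i<n. \<epsilon> i * (v i f - mol (SS k) (AA k i) f)\<bar>"
        by (simp add: sum_subtractf right_diff_distrib)
      also have "\<dots> \<le> (\<Sum>i<n. \<bar>\<epsilon> i * (v i f - mol (SS k) (AA k i) f)\<bar>)" by (rule sum_abs)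
      also have "\<dots> \<le> (\<Sum>i<n. \<bar>\<epsilon> i\<bar> * (1 / real (Suc k)))"
      proof (rule sum_mono)
        fix i assume "i \<in> {..<n}"
        then have "\<bar>v i f - mol (SS k) (AA k i) f\<bar> \<le> 1 / real (Suc k)" using fin(4) f by auto
        then show "\<bar>\<epsilon> i * (v i f - mol (SS k) (AA k i) f)\<bar> \<le> \<bar>\<epsilon> i\<bar> * (1 / real (Suc k))"
          unfolding abs_mult by (rule mult_left_mono) simp
      qed
      also have "\<dots> = (\<Sum>i<n. \<bar>\<epsilon> i\<bar>) / real (Suc k)" by (simp add: sum_divide_distrib)
      finally show "\<bar>(\<Sum>i<n. \<epsilon> i * v i f) - (\<Sum>i<n. \<epsilon> i * mol (SS k) (AA k i) f)\<bar>
        \<le> (\<Sum>i<n. \<bar>\<epsilon> i\<bar>) / real (Suc k)" .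
    qed
    then have "\<bar>free_norm M (\<lambda>f. \<Sum>i<n. \<epsilon> i * v i f) - NS k \<epsilon>\<bar> \<le> (\<Sum>i<n. \<bar>\<epsilon> i\<bar>) / real (Suc k)"
      unfolding NS_def by (rule free_norm_close[OF b1 b2])
    then show "\<bar>NS k \<epsilon> - free_norm M (\<lambda>f. \<Sum>i<n. \<epsilon> i * v i f)\<bar> \<le> (\<Sum>i<n. \<bar>\<epsilon> i\<bar>) / real (Suc k)"
      by (simp add: abs_minus_commute)
  qed
  have t1: "(\<lambda>k. N k i powr q) \<longlonglongrightarrow> free_norm M (v i) powr q" if "i \<in> {..<n}" for i
    using that by (intro tendsto_powr' Nconv tendsto_const)
       (auto simp: assms(2) N_def free_norm_nonneg[OF molb])
  have t2: "(\<lambda>k. \<Sum>i<n. N k i powr q) \<longlonglongrightarrow> (\<Sum>i<n. free_norm M (v i) powr q)"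
    by (rule tendsto_sum) (rule t1)
  have t3: "(\<lambda>k. (\<Sum>i<n. N k i powr q) powr (1/q)) \<longlonglongrightarrow> (\<Sum>i<n. free_norm M (v i) powr q) powr (1/q)"
    by (intro tendsto_powr' t2 tendsto_const) (auto simp: assms(2) sum_nonneg)
  have t4: "(\<lambda>k. C * sqrt ((\<Sum>\<epsilon>\<in>signs n. (NS k \<epsilon>)\<^sup>2) / 2 ^ n))
      \<longlonglongrightarrow> C * sqrt ((\<Sum>\<epsilon>\<in>signs n. (free_norm M (\<lambda>f. \<Sum>i<n. \<epsilon> i * v i f))\<^sup>2) / 2 ^ n)"
    by (intro tendsto_intros NSconv) simp
  show "(\<Sum>i<n. free_norm M (v i) powr q) powr (1/q)
        \<le> C * sqrt ((\<Sum>\<epsilon>\<in>signs n. (free_norm M (\<lambda>f. \<Sum>i<n. \<epsilon> i * v i f))\<^sup>2) / 2 ^ n)"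
    by (rule LIMSEQ_le[OF t3 t4]) (intro exI[of _ "0::nat"] allI impI ineq)
qed

lemma lip0_empty: "lip0_ball {} = {\<lambda>_. 0}"
proof (intro equalityI subsetI)
  fix f assume "f \<in> lip0_ball ({}::'a::metric_space set)"
  then have "f = (\<lambda>_. 0)" by (intro ext) (simp add: lip0_ball_def)
  then show "f \<in> {\<lambda>_. 0}" by simp
qed (simp add: zero_in_lip0)

lemma L0:
  assumes "C \<ge> 0"
  shows "cotC {} q C"
  unfolding cotC_def
proof (intro allI impI)
  fix n :: nat and v :: "nat \<Rightarrow> ('a::metric_space \<Rightarrow> real) \<Rightarrow> real"
  assume v: "\<forall>i<n. v i \<in> free_space {}"
  have z: "free_norm {} (v i) = 0" if "i < n" for i
  proof -
    have vi: "v i \<in> free_space {}" using v that by blast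
    have ex: "\<forall>e>0. \<exists>S a. finite S \<and> S \<subseteq> {} \<and>
       (\<forall>f \<in> lip0_ball {}. \<bar>v i f - (\<Sum>x\<in>S. a x * f x)\<bar> \<le> e)"
      using vi unfolding free_space_def mem_Collect_eq .
    have le: "\<bar>v i (\<lambda>_. 0)\<bar> \<le> 0 + e" if "e > 0" for e
    proof -
      have "\<exists>S a. finite S \<and> S \<subseteq> {} \<and>
         (\<forall>f \<in> lip0_ball {}. \<bar>v i f - (\<Sum>x\<in>S. a x * f x)\<bar> \<le> e)"
        by (rule mp[OF spec[OF ex, of e] that])
      then show ?thesis
      proof (elim exE conjE)
        fix S :: "'a set" and a :: "'a \<Rightarrow> real"
        assume Sa: "\<forall>f \<in> lip0_ball {}. \<bar>v i f - (\<Sum>x\<in>S. a x * f x)\<bar> \<le> e"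
        have "(\<lambda>_. 0) \<in> lip0_ball ({}::'a set)" by (rule zero_in_lip0)
        with Sa have "\<bar>v i (\<lambda>_. 0) - (\<Sum>x\<in>S. a x * 0)\<bar> \<le> e" by (rule bspec)
        then show ?thesis by simp
      qed
    qed
    have "\<bar>v i (\<lambda>_. 0)\<bar> \<le> 0" by (rule field_le_epsilon[OF le])
    then have z0: "v i (\<lambda>_. 0) = 0" by simp
    have "{\<bar>v i f\<bar> | f. f \<in> lip0_ball ({}::'a set)} = {\<bar>v i (\<lambda>_. 0)\<bar>}"
      unfolding lip0_empty by blast
    then show ?thesis unfolding free_norm_def z0 by simp
  qed
  have "(\<Sum>i<n. free_norm {} (v i) powr q) = 0" using z by simp
  moreover have "0 \<le> C * sqrt ((\<Sum>\<epsilon>\<in>signs n. (free_norm {} (\<lambda>f. \<Sum>i<n. \<epsilon> i * v i f))\<^sup>2) / 2 ^ n)"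
    using assms by (intro mult_nonneg_nonneg real_sqrt_ge_zero divide_nonneg_pos sum_nonneg) auto
  ultimately show "(\<Sum>i<n. free_norm {} (v i) powr q) powr (1/q)
        \<le> C * sqrt ((\<Sum>\<epsilon>\<in>signs n. (free_norm {} (\<lambda>f. \<Sum>i<n. \<epsilon> i * v i f))\<^sup>2) / 2 ^ n)"
    by simp
qed

lemma znorm_nonneg:
  fixes S :: "'a::metric_space set"
  assumes "finite S" "(\<Sum>x\<in>S. a x) = 0"
  shows "0 \<le> znorm S a"
proof (cases "S = {}")
  case True
  have "{\<bar>\<Sum>x\<in>S. a x * g x\<bar> | g. 1-lipschitz_on S g} = {0}"
  proof (intro equalityI subsetI)
    fix t assume "t \<in> {\<bar>\<Sum>x\<in>S. a x * g x\<bar> | g. 1-lipschitz_on S g}"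
    then show "t \<in> {0}" using True by auto
  next
    fix t assume "t \<in> {0::real}"
    then have t0: "t = 0" by simp
    show "t \<in> {\<bar>\<Sum>x\<in>S. a x * g x\<bar> | g. 1-lipschitz_on S g}"
    proof (rule CollectI, rule exI[of _ "\<lambda>_. 0"])
      show "t = \<bar>\<Sum>x\<in>S. a x * 0\<bar> \<and> 1-lipschitz_on S (\<lambda>_::'a. 0::real)"
        using True t0 by (simp add: lipschitz_on_def)
    qed
  qed
  then show ?thesis unfolding znorm_def by simp
next
  case False
  have b: "bnd S (mol S a)" by (rule free_space_bnd[OF False mol_in_free[OF assms(1) subset_refl]])
  show ?thesis using free_norm_nonneg[OF b] key[OF assms(1) subset_refl assms(2)] by simp
qed

lemma dist_scale:
  fixes x y :: "'a::real_normed_vector"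
  assumes "c > 0"
  shows "dist (c *\<^sub>R x) (c *\<^sub>R y) = c * dist x y"
proof -
  have "dist (c *\<^sub>R x) (c *\<^sub>R y) = norm (c *\<^sub>R (x - y))" by (simp add: dist_norm scaleR_diff_right)
  also have "\<dots> = c * dist x y" using assms by (simp add: dist_norm)
  finally show ?thesis .
qed

lemma znorm_scale:
  fixes S :: "'a::real_normed_vector set"
  assumes c: "c > 0"
  shows "znorm ((\<lambda>x. c *\<^sub>R x) ` S) (\<lambda>y. b (y /\<^sub>R c) / c) = znorm S b"
proof -
  define T where "T = (\<lambda>x. c *\<^sub>R x) ` S"
  have inj: "inj_on (\<lambda>x. c *\<^sub>R x) S" using c by (auto simp: inj_on_def)
  have cne: "c \<noteq> 0" using c by simp
  have bk: "(c *\<^sub>R x) /\<^sub>R c = x" for x :: "'a" using cne by simp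
  have sumT: "(\<Sum>y\<in>T. b (y /\<^sub>R c) / c * g y) = (\<Sum>x\<in>S. b x / c * g (c *\<^sub>R x))" for g
    unfolding T_def by (simp add: sum.reindex[OF inj] bk cne)
  have "{\<bar>\<Sum>y\<in>T. b (y /\<^sub>R c) / c * g y\<bar> | g. 1-lipschitz_on T g}
      = {\<bar>\<Sum>x\<in>S. b x * g x\<bar> | g. 1-lipschitz_on S g}"
  proof (intro equalityI subsetI)
    fix t assume "t \<in> {\<bar>\<Sum>y\<in>T. b (y /\<^sub>R c) / c * g y\<bar> | g. 1-lipschitz_on T g}"
    then obtain g where g: "1-lipschitz_on T g" "t = \<bar>\<Sum>y\<in>T. b (y /\<^sub>R c) / c * g y\<bar>" by auto
    define g' where "g' x = g (c *\<^sub>R x) / c" for x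
    have "1-lipschitz_on S g'"
      unfolding lipschitz_on_def
    proof (intro conjI ballI)
      fix x y assume xy: "x \<in> S" "y \<in> S"
      then have "c *\<^sub>R x \<in> T" "c *\<^sub>R y \<in> T" unfolding T_def by auto
      then have "dist (g (c *\<^sub>R x)) (g (c *\<^sub>R y)) \<le> 1 * dist (c *\<^sub>R x) (c *\<^sub>R y)"
        using g(1) unfolding lipschitz_on_def by blast
      then have "\<bar>g (c *\<^sub>R x) - g (c *\<^sub>R y)\<bar> \<le> c * dist x y"
        unfolding dist_scale[OF c] by (simp add: dist_real_def)
      then have "\<bar>g (c *\<^sub>R x) - g (c *\<^sub>R y)\<bar> / c \<le> dist x y"
        using c by (simp add: divide_le_eq mult.commute)
      moreover have "dist (g' x) (g' y) = \<bar>g (c *\<^sub>R x) - g (c *\<^sub>R y)\<bar> / c"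
        unfolding g'_def dist_real_def using c by (simp add: diff_divide_distrib[symmetric])
      ultimately show "dist (g' x) (g' y) \<le> 1 * dist x y" by simp
    qed simp
    moreover have "t = \<bar>\<Sum>x\<in>S. b x * g' x\<bar>"
      unfolding g(2) sumT g'_def by (simp add: mult.commute)
    ultimately show "t \<in> {\<bar>\<Sum>x\<in>S. b x * g x\<bar> | g. 1-lipschitz_on S g}" by blast
  next
    fix t assume "t \<in> {\<bar>\<Sum>x\<in>S. b x * g x\<bar> | g. 1-lipschitz_on S g}"
    then obtain g' where g': "1-lipschitz_on S g'" "t = \<bar>\<Sum>x\<in>S. b x * g' x\<bar>" by auto
    define g where "g y = c * g' (y /\<^sub>R c)" for y
    have gc: "g (c *\<^sub>R x) = c * g' x" for x unfolding g_def bk ..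
    have "1-lipschitz_on T g"
      unfolding lipschitz_on_def
    proof (intro conjI ballI)
      fix y1 y2 assume "y1 \<in> T" "y2 \<in> T"
      then obtain x1 x2 where x: "x1 \<in> S" "x2 \<in> S" "y1 = c *\<^sub>R x1" "y2 = c *\<^sub>R x2"
        unfolding T_def by auto
      have "dist (g' x1) (g' x2) \<le> 1 * dist x1 x2" using g'(1) x(1,2) unfolding lipschitz_on_def by blast
      then have "c * \<bar>g' x1 - g' x2\<bar> \<le> c * dist x1 x2"
        using c by (simp add: dist_real_def)
      moreover have "dist (g y1) (g y2) = c * \<bar>g' x1 - g' x2\<bar>"
        unfolding x(3,4) gc dist_real_def using c by (simp add: right_diff_distrib[symmetric] abs_mult)
      moreover have "dist y1 y2 = c * dist x1 x2" unfolding x(3,4) by (rule dist_scale[OF c])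
      ultimately show "dist (g y1) (g y2) \<le> 1 * dist y1 y2" by simp
    qed simp
    moreover have "t = \<bar>\<Sum>y\<in>T. b (y /\<^sub>R c) / c * g y\<bar>"
      unfolding g'(2) sumT gc using c by simp
    ultimately show "t \<in> {\<bar>\<Sum>y\<in>T. b (y /\<^sub>R c) / c * g y\<bar> | g. 1-lipschitz_on T g}" by blast
  qed
  then show ?thesis unfolding znorm_def T_def by simp
qed

lemma lp_mono:
  fixes w :: "nat \<Rightarrow> real"
  assumes w: "\<And>i. i < n \<Longrightarrow> 0 \<le> w i" and q: "0 < q" and qr: "q \<le> r"
  shows "(\<Sum>i<n. w i powr r) powr (1/r) \<le> (\<Sum>i<n. w i powr q) powr (1/q)"
proof -
  define T where "T = (\<Sum>i<n. w i powr q)"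
  have T0: "0 \<le> T" unfolding T_def by (simp add: sum_nonneg)
  show ?thesis
  proof (cases "T = 0")
    case True
    have "\<forall>i\<in>{..<n}. w i powr q = 0"
      using True unfolding T_def by (subst sum_nonneg_eq_0_iff[symmetric]) auto
    then have "\<forall>i\<in>{..<n}. w i = 0" by simp
    then have "(\<Sum>i<n. w i powr r) = 0" by simp
    then show ?thesis by simp
  next
    case False
    then have Tp: "T > 0" using T0 by simp
    define s where "s = T powr (1/q)"
    have sp: "s > 0" unfolding s_def using Tp by simp
    have sq: "s powr q = T" unfolding s_def powr_powr using q Tp by simp
    have ws: "w i \<le> s" if "i < n" for i
    proof -
      have "w i powr q \<le> T" unfolding T_def using that by (intro member_le_sum) auto
      then have "(w i powr q) powr (1/q) \<le> T powr (1/q)" using q by (intro powr_mono2) auto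
      moreover have "(w i powr q) powr (1/q) = w i" unfolding powr_powr using q w[OF that] by simp
      ultimately show ?thesis unfolding s_def by simp
    qed
    have "(\<Sum>i<n. w i powr r) / s powr r = (\<Sum>i<n. (w i / s) powr r)"
      by (simp add: powr_divide sum_divide_distrib)
    also have "\<dots> \<le> (\<Sum>i<n. (w i / s) powr q)"
    proof (rule sum_mono)
      fix i assume "i \<in> {..<n}"
      then have i: "i < n" by simp
      have "w i / s \<le> 1" using ws[OF i] sp by simp
      moreover have "0 \<le> w i / s" using w[OF i] sp by simp
      ultimately show "(w i / s) powr r \<le> (w i / s) powr q" using qr by (intro powr_mono') auto
    qed
    also have "\<dots> = T / s powr q" by (simp add: powr_divide sum_divide_distrib T_def)
    also have "\<dots> = 1" using sq Tp by simp
    finally have "(\<Sum>i<n. w i powr r) / s powr r \<le> 1" .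
    then have le: "(\<Sum>i<n. w i powr r) \<le> s powr r" using sp by (simp add: divide_le_eq)
    have "(\<Sum>i<n. w i powr r) powr (1/r) \<le> (s powr r) powr (1/r)"
      using q qr le by (intro powr_mono2) (auto simp: sum_nonneg)
    also have "\<dots> = s" unfolding powr_powr using q qr sp by simp
    finally show ?thesis unfolding s_def T_def .
  qed
qed

lemma null_cover:
  fixes T :: "nat \<Rightarrow> 'a::real_normed_vector set"
  assumes fin: "\<And>k. finite (T k)" and small: "\<And>k y. y \<in> T k \<Longrightarrow> norm y \<le> 1 / real (Suc k)"
  shows "\<exists>x. x \<longlonglongrightarrow> 0 \<and> x 0 = 0 \<and> (\<forall>k. T k \<subseteq> range x)"
proof -
  define l where "l k = (SOME l. set l = T k)" for k
  have l: "set (l k) = T k" for k unfolding l_def using finite_list[OF fin[of k]] by (rule someI_ex)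
  define x where "x n = (if n = 0 then 0 else
     (if snd (prod_decode (n - 1)) < length (l (fst (prod_decode (n - 1))))
      then l (fst (prod_decode (n - 1))) ! snd (prod_decode (n - 1)) else 0))" for n
  have x0: "x 0 = 0" unfolding x_def by simp
  have cover: "T k \<subseteq> range x" for k
  proof
    fix y assume "y \<in> T k"
    then have "y \<in> set (l k)" using l by simp
    then obtain j where j: "j < length (l k)" "l k ! j = y" by (auto simp: in_set_conv_nth)
    have "x (Suc (prod_encode (k, j))) = y" unfolding x_def using j by simp
    then show "y \<in> range x" by (metis rangeI)
  qed
  have fin_bad: "finite {n. e \<le> norm (x n)}" if e: "e > 0" for e
  proof -
    obtain K :: nat where K: "1 / e < real K" using reals_Archimedean2 by blast
    have "{n. e \<le> norm (x n)} \<subseteq> Suc ` prod_encode ` (SIGMA k:{..<K}. {..<length (l k)})"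
    proof
      fix n assume "n \<in> {n. e \<le> norm (x n)}"
      then have en: "e \<le> norm (x n)" by simp
      have "n \<noteq> 0"
      proof
        assume "n = 0"
        then have "norm (x n) = 0" using x0 by simp
        then show False using en e by simp
      qed
      then obtain m where m: "n = Suc m" by (cases n) auto
      obtain k j where kj: "prod_decode m = (k, j)" by (cases "prod_decode m")
      have xn: "x n = (if j < length (l k) then l k ! j else 0)" using kj by (simp add: x_def m)
      have jl: "j < length (l k)"
      proof (rule ccontr)
        assume "\<not> j < length (l k)"
        then have "x n = 0" using xn by simp
        then show False using en e by simp
      qed
      then have "l k ! j \<in> set (l k)" by (rule nth_mem)
      then have "x n \<in> T k" using xn jl l by simp
      then have "norm (x n) \<le> 1 / real (Suc k)" by (rule small)
      then have "e \<le> 1 / real (Suc k)" using en by linarith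
      then have "e * real (Suc k) \<le> 1" by (simp add: le_divide_eq)
      then have "real (Suc k) \<le> 1 / e" using e by (simp add: le_divide_eq mult.commute)
      then have "real k < real K" using K by simp
      then have "k < K" by simp
      moreover have "m = prod_encode (k, j)" using kj by (metis prod_decode_inverse)
      ultimately show "n \<in> Suc ` prod_encode ` (SIGMA k:{..<K}. {..<length (l k)})" using m jl by blast
    qed
    moreover have "finite (Suc ` prod_encode ` (SIGMA k:{..<K}. {..<length (l k)}))"
      by (intro finite_imageI finite_SigmaI) auto
    ultimately show ?thesis by (rule finite_subset)
  qed
  have lim: "x \<longlonglongrightarrow> 0"
    unfolding tendsto_iff
  proof (intro allI impI)
    fix e :: real assume "e > 0"
    have "eventually (\<lambda>n. \<not> (e \<le> norm (x n))) cofinite"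
      unfolding eventually_cofinite using fin_bad[OF \<open>e>0\<close>] by simp
    then show "eventually (\<lambda>n. dist (x n) 0 < e) sequentially"
      unfolding cofinite_eq_sequentially by (simp add: not_le)
  qed
  show ?thesis using lim x0 cover by blast
qed

lemma RHSv_nonneg: "0 \<le> RHSv S a n"
  unfolding RHSv_def by (intro real_sqrt_ge_zero divide_nonneg_pos sum_nonneg) auto

lemma glue_fail:
  fixes qk Ck :: "nat \<Rightarrow> real"
  assumes "\<forall>k. \<exists>n S (a :: nat \<Rightarrow> 'a::real_normed_vector \<Rightarrow> real). finite S \<and> (\<forall>i<n. (\<Sum>x\<in>S. a i x) = 0)
              \<and> \<not> LHSv (qk k) S a n \<le> Ck k * RHSv S a n"
  shows "\<exists>x::nat \<Rightarrow> 'a. x \<longlonglongrightarrow> 0 \<and> x 0 = 0 \<and> (\<forall>k. \<exists>n S a. finite S \<and> S \<subseteq> range x \<and>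
     (\<forall>i<n. (\<Sum>x\<in>S. a i x) = 0) \<and> \<not> LHSv (qk k) S a n \<le> Ck k * RHSv S a n)"
proof -
  define P where "P k t \<longleftrightarrow> finite (fst (snd t)) \<and> (\<forall>i<fst t. (\<Sum>x\<in>fst (snd t). snd (snd t) i x) = 0)
    \<and> \<not> LHSv (qk k) (fst (snd t)) (snd (snd t)) (fst t) \<le> Ck k * RHSv (fst (snd t)) (snd (snd t)) (fst t)"
    for k and t :: "nat \<times> 'a set \<times> (nat \<Rightarrow> 'a \<Rightarrow> real)"
  have "\<forall>k. \<exists>t. P k t"
  proof
    fix k
    from assms have "\<exists>n S (a :: nat \<Rightarrow> 'a \<Rightarrow> real). finite S \<and> (\<forall>i<n. (\<Sum>x\<in>S. a i x) = 0)
              \<and> \<not> LHSv (qk k) S a n \<le> Ck k * RHSv S a n" by (rule spec)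
    then show "\<exists>t. P k t"
    proof (elim exE)
      fix n :: nat and S :: "'a set" and a :: "nat \<Rightarrow> 'a \<Rightarrow> real"
      assume "finite S \<and> (\<forall>i<n. (\<Sum>x\<in>S. a i x) = 0) \<and> \<not> LHSv (qk k) S a n \<le> Ck k * RHSv S a n"
      then have "P k (n, S, a)" unfolding P_def by simp
      then show ?thesis by (rule exI)
    qed
  qed
  then have "\<exists>f. \<forall>k. P k (f k)" by (rule choice)
  then obtain f where f: "\<forall>k. P k (f k)" by (rule exE)
  define nn where "nn k = fst (f k)" for k
  define SS where "SS k = fst (snd (f k))" for k
  define AA where "AA k = snd (snd (f k))" for k
  have inst: "finite (SS k)" "\<forall>i<nn k. (\<Sum>x\<in>SS k. AA k i x) = 0"
    "\<not> LHSv (qk k) (SS k) (AA k) (nn k) \<le> Ck k * RHSv (SS k) (AA k) (nn k)" for k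
    using f[rule_format, of k] unfolding P_def nn_def SS_def AA_def by simp_all
  define c where "c k = 1 / (real (Suc k) * (1 + (\<Sum>x\<in>SS k. norm x)))" for k
  have cpos: "c k > 0" for k
  proof -
    have "0 \<le> (\<Sum>x\<in>SS k. norm x)" by (simp add: sum_nonneg)
    then show ?thesis unfolding c_def by simp
  qed
  have cne: "c k \<noteq> 0" for k using cpos[of k] by simp
  define T where "T k = (\<lambda>x. c k *\<^sub>R x) ` SS k" for k
  have Tfin: "finite (T k)" for k unfolding T_def using inst(1) by simp
  have Tsmall: "norm y \<le> 1 / real (Suc k)" if yT: "y \<in> T k" for k y
  proof -
    obtain z where z: "z \<in> SS k" "y = c k *\<^sub>R z" using yT unfolding T_def by auto
    have "norm z \<le> (\<Sum>x\<in>SS k. norm x)" using z(1) inst(1) by (intro member_le_sum) auto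
    then have "norm z \<le> 1 + (\<Sum>x\<in>SS k. norm x)" by simp
    then have "c k * norm z \<le> c k * (1 + (\<Sum>x\<in>SS k. norm x))"
      using cpos[of k] by (intro mult_left_mono) auto
    also have "\<dots> = 1 / real (Suc k)"
    proof -
      have "0 \<le> (\<Sum>x\<in>SS k. norm x)" by (simp add: sum_nonneg)
      then have B: "1 + (\<Sum>x\<in>SS k. norm x) \<noteq> 0" by linarith
      have "c k * (1 + (\<Sum>x\<in>SS k. norm x)) = (1 * (1 + (\<Sum>x\<in>SS k. norm x))) / (real (Suc k) * (1 + (\<Sum>x\<in>SS k. norm x)))"
        unfolding c_def by simp
      also have "\<dots> = 1 / real (Suc k)" by (rule nonzero_mult_divide_mult_cancel_right[OF B])
      finally show ?thesis .
    qed
    finally show ?thesis using z(2) cpos[of k] by simp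
  qed
  have "\<exists>x::nat \<Rightarrow> 'a. x \<longlonglongrightarrow> 0 \<and> x 0 = 0 \<and> (\<forall>k. T k \<subseteq> range x)"
    by (rule null_cover[of T], rule Tfin, rule Tsmall, assumption)
  then obtain x :: "nat \<Rightarrow> 'a" where x0: "x \<longlonglongrightarrow> 0 \<and> x 0 = 0 \<and> (\<forall>k. T k \<subseteq> range x)"
    by (rule exE)
  then have x: "x \<longlonglongrightarrow> 0" "x 0 = 0" "\<forall>k. T k \<subseteq> range x" by simp_all
  have "\<exists>n S a. finite S \<and> S \<subseteq> range x \<and>
     (\<forall>i<n. (\<Sum>x\<in>S. a i x) = 0) \<and> \<not> LHSv (qk k) S a n \<le> Ck k * RHSv S a n" for k
  proof -
    define a' where "a' i y = AA k i (y /\<^sub>R c k) / c k" for i y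
    have inj: "inj_on (\<lambda>x. c k *\<^sub>R x) (SS k)" using cne[of k] by (auto simp: inj_on_def)
    have bk: "(c k *\<^sub>R z) /\<^sub>R c k = z" for z :: 'a using cne[of k] by simp
    have zs: "(\<Sum>y\<in>T k. a' i y) = 0" if "i < nn k" for i
    proof -
      have "(\<Sum>y\<in>T k. a' i y) = (\<Sum>z\<in>SS k. AA k i z / c k)"
        unfolding T_def a'_def by (simp add: sum.reindex[OF inj] cne)
      also have "\<dots> = (\<Sum>z\<in>SS k. AA k i z) / c k" by (simp add: sum_divide_distrib)
      also have "\<dots> = 0" using inst(2) that by simp
      finally show ?thesis .
    qed
    have zn: "znorm (T k) (a' i) = znorm (SS k) (AA k i)" for i
      unfolding T_def a'_def by (rule znorm_scale[OF cpos[of k]])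
    have zc: "znorm (T k) (\<lambda>y. \<Sum>i<nn k. \<epsilon> i * a' i y) = znorm (SS k) (\<lambda>z. \<Sum>i<nn k. \<epsilon> i * AA k i z)" for \<epsilon>
    proof -
      have "(\<lambda>y. \<Sum>i<nn k. \<epsilon> i * a' i y) = (\<lambda>y. (\<lambda>z. \<Sum>i<nn k. \<epsilon> i * AA k i z) (y /\<^sub>R c k) / c k)"
        unfolding a'_def by (simp add: sum_divide_distrib)
      then show ?thesis unfolding T_def using znorm_scale[OF cpos[of k], of "SS k" "\<lambda>z. \<Sum>i<nn k. \<epsilon> i * AA k i z"] by simp
    qed
    have "LHSv (qk k) (T k) a' (nn k) = LHSv (qk k) (SS k) (AA k) (nn k)"
      unfolding LHSv_def zn ..
    moreover have "RHSv (T k) a' (nn k) = RHSv (SS k) (AA k) (nn k)"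
      unfolding RHSv_def zc ..
    ultimately show ?thesis using Tfin[of k] x(3) zs inst(3)[of k]
      by (intro exI[of _ "nn k"] exI[of _ "T k"] exI[of _ a']) simp
  qed
  then show ?thesis using x(1,2) by blast
qed

lemma QQ_mono: "QQ M q C \<Longrightarrow> N \<subseteq> M \<Longrightarrow> QQ N q C"
  unfolding QQ_def by (meson order_trans)

lemma up:
  fixes K :: "'a::metric_space set"
  assumes "cotC (UNIV :: 'a set) q C" "q > 0" "C \<ge> 0"
  shows "cotC K q C"
proof (cases "K = {}")
  case True
  then show ?thesis using L0[OF assms(3)] by simp
next
  case False
  have "QQ (UNIV :: 'a set) q C" by (rule L1[OF assms(1)])
  then have "QQ K q C" by (rule QQ_mono) simp
  then show ?thesis by (rule L2[OF False assms(2)])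
qed

lemma not_cot_QQ:
  assumes q: "q > 0" and nc: "\<not> (\<exists>C>0. cotC (UNIV::'a::real_normed_vector set) q C)" and C: "C > 0"
  shows "\<exists>n S (a :: nat \<Rightarrow> 'a \<Rightarrow> real). finite S \<and> (\<forall>i<n. (\<Sum>x\<in>S. a i x) = 0)
              \<and> \<not> LHSv q S a n \<le> C * RHSv S a n"
proof -
  have "\<not> cotC (UNIV::'a set) q C"
  proof
    assume "cotC (UNIV::'a set) q C"
    then have "\<exists>C>0. cotC (UNIV::'a set) q C" using C by blast
    with nc show False by simp
  qed
  moreover have "QQ (UNIV::'a set) q C \<Longrightarrow> cotC (UNIV::'a set) q C"
    by (rule L2[OF UNIV_not_empty q])
  ultimately have "\<not> QQ (UNIV::'a set) q C" by blast
  then show ?thesis unfolding QQ_def by simp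
qed

lemma down_q:
  assumes q: "q > 0"
    and h: "\<forall>x::nat \<Rightarrow> 'a::real_normed_vector. x \<longlonglongrightarrow> 0 \<and> x 0 = 0 \<longrightarrow> (\<exists>C>0. cotC (range x) q C)"
  shows "\<exists>C>0. cotC (UNIV::'a set) q C"
proof (rule ccontr)
  assume nc: "\<not> ?thesis"
  have "\<forall>k. \<exists>n S (a :: nat \<Rightarrow> 'a \<Rightarrow> real). finite S \<and> (\<forall>i<n. (\<Sum>x\<in>S. a i x) = 0)
              \<and> \<not> LHSv ((\<lambda>_. q) k) S a n \<le> (\<lambda>k. real (Suc k)) k * RHSv S a n"
    using not_cot_QQ[OF q nc] by simp
  from glue_fail[OF this] obtain x :: "nat \<Rightarrow> 'a" where
    x: "x \<longlonglongrightarrow> 0 \<and> x 0 = 0 \<and> (\<forall>k. \<exists>n S a. finite S \<and> S \<subseteq> range x \<and>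
     (\<forall>i<n. (\<Sum>x\<in>S. a i x) = 0) \<and> \<not> LHSv q S a n \<le> real (Suc k) * RHSv S a n)"
    by (elim exE) simp
  then have "\<exists>C>0. cotC (range x) q C" using h by simp
  then obtain C where C: "C > 0" "cotC (range x) q C" by (elim exE conjE)
  have Q: "QQ (range x) q C" by (rule L1[OF C(2)])
  obtain K :: nat where K: "C < real K" using reals_Archimedean2 by blast
  from x obtain n S a where inst: "finite S" "S \<subseteq> range x" "\<forall>i<n. (\<Sum>x\<in>S. a i x) = 0"
    "\<not> LHSv q S a n \<le> real (Suc K) * RHSv S a n" by blast
  have "LHSv q S a n \<le> C * RHSv S a n" using Q inst(1,2,3) unfolding QQ_def by simp
  also have "\<dots> \<le> real (Suc K) * RHSv S a n" using K RHSv_nonneg by (intro mult_right_mono) auto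
  finally show False using inst(4) by simp
qed

lemma down_rad:
  assumes h: "\<forall>x::nat \<Rightarrow> 'a::real_normed_vector. x \<longlonglongrightarrow> 0 \<and> x 0 = 0 \<longrightarrow> (\<exists>q. 2 \<le> q \<and> (\<exists>C>0. cotC (range x) q C))"
  shows "\<exists>q. 2 \<le> q \<and> (\<exists>C>0. cotC (UNIV::'a set) q C)"
proof (rule ccontr)
  assume nc: "\<not> ?thesis"
  have "\<forall>k. \<exists>n S (a :: nat \<Rightarrow> 'a \<Rightarrow> real). finite S \<and> (\<forall>i<n. (\<Sum>x\<in>S. a i x) = 0)
              \<and> \<not> LHSv ((\<lambda>k. real k + 2) k) S a n \<le> (\<lambda>k. real (Suc k)) k * RHSv S a n"
  proof
    fix k
    have q: "real k + 2 > 0" by simp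
    have "\<not> (\<exists>C>0. cotC (UNIV::'a set) (real k + 2) C)" using nc by simp
    from not_cot_QQ[OF q this, of "real (Suc k)"]
    show "\<exists>n S (a :: nat \<Rightarrow> 'a \<Rightarrow> real). finite S \<and> (\<forall>i<n. (\<Sum>x\<in>S. a i x) = 0)
              \<and> \<not> LHSv ((\<lambda>k. real k + 2) k) S a n \<le> (\<lambda>k. real (Suc k)) k * RHSv S a n" by simp
  qed
  from glue_fail[OF this] obtain x :: "nat \<Rightarrow> 'a" where
    x: "x \<longlonglongrightarrow> 0 \<and> x 0 = 0 \<and> (\<forall>k. \<exists>n S a. finite S \<and> S \<subseteq> range x \<and>
     (\<forall>i<n. (\<Sum>x\<in>S. a i x) = 0) \<and> \<not> LHSv (real k + 2) S a n \<le> real (Suc k) * RHSv S a n)"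
    by (elim exE) simp
  then have "\<exists>q. 2 \<le> q \<and> (\<exists>C>0. cotC (range x) q C)" using h by simp
  then obtain q C where C: "2 \<le> q" "C > 0" "cotC (range x) q C" by (elim exE conjE)
  have Q: "QQ (range x) q C" by (rule L1[OF C(3)])
  obtain K :: nat where K: "max C q < real K" using reals_Archimedean2 by blast
  from x obtain n S a where inst: "finite S" "S \<subseteq> range x" "\<forall>i<n. (\<Sum>x\<in>S. a i x) = 0"
    "\<not> LHSv (real K + 2) S a n \<le> real (Suc K) * RHSv S a n" by blast
  have "LHSv (real K + 2) S a n \<le> LHSv q S a n"
    unfolding LHSv_def
  proof (rule lp_mono)
    fix i assume "i < n"
    then show "0 \<le> znorm S (a i)" using inst(1,3) znorm_nonneg by blast
  next
    show "0 < q" using C(1) by simp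
  next
    show "q \<le> real K + 2" using K by simp
  qed
  also have "\<dots> \<le> C * RHSv S a n" using Q inst(1,2,3) unfolding QQ_def by simp
  also have "\<dots> \<le> real (Suc K) * RHSv S a n" using K RHSv_nonneg by (intro mult_right_mono) auto
  finally show False using inst(4) by simp
qed

lemma range_null:
  fixes x :: "nat \<Rightarrow> 'a::real_normed_vector"
  assumes "x \<longlonglongrightarrow> 0" "x 0 = 0"
  shows "compact (range x) \<and> countable (range x)"
proof -
  have "compactin euclidean (insert 0 (range x))"
    by (rule compactin_sequence_with_limit) (use assms(1) in auto)
  moreover have "insert 0 (range x) = range x" using assms(2) by (metis insert_absorb rangeI)
  ultimately show ?thesis by simp
qed

theorem proposition5p4:
  fixes q :: real
  assumes "2 \<le> q"
  shows "(free_has_rademacher_cotype (UNIV :: 'a::banach set)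
            \<longleftrightarrow> (\<forall>K::'a set. compact K \<longrightarrow> free_has_rademacher_cotype K))
       \<and> (free_has_rademacher_cotype (UNIV :: 'a set)
            \<longleftrightarrow> (\<forall>K::'a set. compact K \<and> countable K \<longrightarrow> free_has_rademacher_cotype K))
       \<and> (free_has_rademacher_cotype (UNIV :: 'a set)
            \<longleftrightarrow> (\<forall>x::nat \<Rightarrow> 'a. x \<longlonglongrightarrow> 0 \<longrightarrow> free_has_rademacher_cotype (range x)))
       \<and> (free_has_cotype (UNIV :: 'a set) q
            \<longleftrightarrow> (\<forall>K::'a set. compact K \<longrightarrow> free_has_cotype K q))
       \<and> (free_has_cotype (UNIV :: 'a set) q
            \<longleftrightarrow> (\<forall>K::'a set. compact K \<and> countable K \<longrightarrow> free_has_cotype K q))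
       \<and> (free_has_cotype (UNIV :: 'a set) q
            \<longleftrightarrow> (\<forall>x::nat \<Rightarrow> 'a. x \<longlonglongrightarrow> 0 \<longrightarrow> free_has_cotype (range x) q))"
proof -
  have qpos: "q > 0" using assms by simp
  have radiff: "free_has_rademacher_cotype M \<longleftrightarrow> (\<exists>p. 2 \<le> p \<and> (\<exists>C>0. cotC M p C))" for M :: "'a set"
    unfolding free_has_rademacher_cotype_def cot_iff ..
  have upq: "free_has_cotype K p" if hU: "free_has_cotype (UNIV :: 'a set) p" and hp: "p > 0" for K :: "'a set" and p
  proof -
    obtain C where C: "C > 0" "cotC (UNIV :: 'a set) p C" using hU unfolding cot_iff by blast
    have "cotC K p C" by (rule up[OF C(2) hp]) (use C(1) in simp)
    then show ?thesis unfolding cot_iff using C(1) by blast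
  qed
  have uprad: "free_has_rademacher_cotype K" if hU: "free_has_rademacher_cotype (UNIV :: 'a set)" for K :: "'a set"
  proof -
    obtain p where p: "2 \<le> p" "free_has_cotype (UNIV :: 'a set) p"
      using hU unfolding free_has_rademacher_cotype_def by blast
    have "free_has_cotype K p" by (rule upq[OF p(2)]) (use p(1) in simp)
    then show ?thesis unfolding free_has_rademacher_cotype_def using p(1) by blast
  qed
  have downq: "free_has_cotype (UNIV :: 'a set) q"
    if "\<forall>x::nat \<Rightarrow> 'a. x \<longlonglongrightarrow> 0 \<and> x 0 = 0 \<longrightarrow> free_has_cotype (range x) q"
    unfolding cot_iff by (rule down_q[OF qpos]) (use that in \<open>simp add: cot_iff\<close>)
  have downrad: "free_has_rademacher_cotype (UNIV :: 'a set)"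
    if "\<forall>x::nat \<Rightarrow> 'a. x \<longlonglongrightarrow> 0 \<and> x 0 = 0 \<longrightarrow> free_has_rademacher_cotype (range x)"
    unfolding radiff by (rule down_rad) (use that in \<open>simp add: radiff\<close>)
  have c1: "free_has_rademacher_cotype (UNIV :: 'a set) \<longleftrightarrow> (\<forall>K::'a set. compact K \<longrightarrow> free_has_rademacher_cotype K)"
  proof
    assume hU: "free_has_rademacher_cotype (UNIV :: 'a set)"
    show "(\<forall>K::'a set. compact K \<longrightarrow> free_has_rademacher_cotype K)" using uprad[OF hU] by blast
  next
    assume H: "(\<forall>K::'a set. compact K \<longrightarrow> free_has_rademacher_cotype K)"
    show "free_has_rademacher_cotype (UNIV :: 'a set)"
    proof (rule downrad, intro allI impI)
      fix x :: "nat \<Rightarrow> 'a" assume hx: "x \<longlonglongrightarrow> 0 \<and> x 0 = 0"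
      then have rx: "compact (range x) \<and> countable (range x)" using range_null by blast
      show "free_has_rademacher_cotype (range x)" using H hx rx by simp
    qed
  qed
  have c2: "free_has_rademacher_cotype (UNIV :: 'a set) \<longleftrightarrow> (\<forall>K::'a set. compact K \<and> countable K \<longrightarrow> free_has_rademacher_cotype K)"
  proof
    assume hU: "free_has_rademacher_cotype (UNIV :: 'a set)"
    show "(\<forall>K::'a set. compact K \<and> countable K \<longrightarrow> free_has_rademacher_cotype K)" using uprad[OF hU] by blast
  next
    assume H: "(\<forall>K::'a set. compact K \<and> countable K \<longrightarrow> free_has_rademacher_cotype K)"
    show "free_has_rademacher_cotype (UNIV :: 'a set)"
    proof (rule downrad, intro allI impI)
      fix x :: "nat \<Rightarrow> 'a" assume hx: "x \<longlonglongrightarrow> 0 \<and> x 0 = 0"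
      then have rx: "compact (range x) \<and> countable (range x)" using range_null by blast
      show "free_has_rademacher_cotype (range x)" using H hx rx by simp
    qed
  qed
  have c3: "free_has_rademacher_cotype (UNIV :: 'a set) \<longleftrightarrow> (\<forall>x::nat \<Rightarrow> 'a. x \<longlonglongrightarrow> 0 \<longrightarrow> free_has_rademacher_cotype (range x))"
  proof
    assume hU: "free_has_rademacher_cotype (UNIV :: 'a set)"
    show "(\<forall>x::nat \<Rightarrow> 'a. x \<longlonglongrightarrow> 0 \<longrightarrow> free_has_rademacher_cotype (range x))" using uprad[OF hU] by blast
  next
    assume H: "(\<forall>x::nat \<Rightarrow> 'a. x \<longlonglongrightarrow> 0 \<longrightarrow> free_has_rademacher_cotype (range x))"
    show "free_has_rademacher_cotype (UNIV :: 'a set)"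
    proof (rule downrad, intro allI impI)
      fix x :: "nat \<Rightarrow> 'a" assume hx: "x \<longlonglongrightarrow> 0 \<and> x 0 = 0"
      then have rx: "compact (range x) \<and> countable (range x)" using range_null by blast
      show "free_has_rademacher_cotype (range x)" using H hx rx by simp
    qed
  qed
  have c4: "free_has_cotype (UNIV :: 'a set) q \<longleftrightarrow> (\<forall>K::'a set. compact K \<longrightarrow> free_has_cotype K q)"
  proof
    assume hU: "free_has_cotype (UNIV :: 'a set) q"
    show "(\<forall>K::'a set. compact K \<longrightarrow> free_has_cotype K q)" using upq[OF hU qpos] by blast
  next
    assume H: "(\<forall>K::'a set. compact K \<longrightarrow> free_has_cotype K q)"
    show "free_has_cotype (UNIV :: 'a set) q"
    proof (rule downq, intro allI impI)
      fix x :: "nat \<Rightarrow> 'a" assume hx: "x \<longlonglongrightarrow> 0 \<and> x 0 = 0"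
      then have rx: "compact (range x) \<and> countable (range x)" using range_null by blast
      show "free_has_cotype (range x) q" using H hx rx by simp
    qed
  qed
  have c5: "free_has_cotype (UNIV :: 'a set) q \<longleftrightarrow> (\<forall>K::'a set. compact K \<and> countable K \<longrightarrow> free_has_cotype K q)"
  proof
    assume hU: "free_has_cotype (UNIV :: 'a set) q"
    show "(\<forall>K::'a set. compact K \<and> countable K \<longrightarrow> free_has_cotype K q)" using upq[OF hU qpos] by blast
  next
    assume H: "(\<forall>K::'a set. compact K \<and> countable K \<longrightarrow> free_has_cotype K q)"
    show "free_has_cotype (UNIV :: 'a set) q"
    proof (rule downq, intro allI impI)
      fix x :: "nat \<Rightarrow> 'a" assume hx: "x \<longlonglongrightarrow> 0 \<and> x 0 = 0"
      then have rx: "compact (range x) \<and> countable (range x)" using range_null by blast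
      show "free_has_cotype (range x) q" using H hx rx by simp
    qed
  qed
  have c6: "free_has_cotype (UNIV :: 'a set) q \<longleftrightarrow> (\<forall>x::nat \<Rightarrow> 'a. x \<longlonglongrightarrow> 0 \<longrightarrow> free_has_cotype (range x) q)"
  proof
    assume hU: "free_has_cotype (UNIV :: 'a set) q"
    show "(\<forall>x::nat \<Rightarrow> 'a. x \<longlonglongrightarrow> 0 \<longrightarrow> free_has_cotype (range x) q)" using upq[OF hU qpos] by blast
  next
    assume H: "(\<forall>x::nat \<Rightarrow> 'a. x \<longlonglongrightarrow> 0 \<longrightarrow> free_has_cotype (range x) q)"
    show "free_has_cotype (UNIV :: 'a set) q"
    proof (rule downq, intro allI impI)
      fix x :: "nat \<Rightarrow> 'a" assume hx: "x \<longlonglongrightarrow> 0 \<and> x 0 = 0"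
      then have rx: "compact (range x) \<and> countable (range x)" using range_null by blast
      show "free_has_cotype (range x) q" using H hx rx by simp
    qed
  qed
  show ?thesis using c1 c2 c3 c4 c5 c6 by (intro conjI)
qed

end
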